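(* Let $d\ge 3$, let $q$ be a prime power, let $V=\mathbb{F}_q^d$ and $1\le k<d/2$. Let $G$ be a group with $\mathrm{PSL}_d(q)\trianglelefteq G\le \mathrm{Aut}(\mathrm{PSL}_d(q))=\mathrm{P}\Gamma\mathrm{L}_d(q)\rtimes\langle\iota\rangle$ and $G\not\le \mathrm{P}\Gamma\mathrm{L}_d(q)$, acting naturally on $$\Omega_k^1=\{\{W,U\}\mid \dim W=k,\ \dim U=d-k,\ V=W\oplus U\}.$$ Then $G$ is not $\mathrm{IBIS}$.
   Context: Here $\iota$ is the graph (inverse-transpose) automorphism, which acts on subspaces of $V$ as the standard polarity sending a $k$-dimensional subspace to a $(d-k)$-dimensional one (reversing inclusions); elements of $G$ outside $\mathrm{P}\Gamma\mathrm{L}_d(q)$ thus act on unordered pairs $\{W,U\}$. A base of a permutation group is a sequence of points with trivial pointwise stabilizer; it is irredundant if each successive stabilizer is strictly smaller. $G$ is $\mathrm{IBIS}$ if all irredundant bases have the same cardinality. *)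

theory Defs
  imports "HOL-Analysis.Analysis" "HOL-Algebra.Bij" "HOL-Algebra.Coset"
begin

text \<open>V = F_q^d is modelled as ('a::{field,finite})^'n with CARD('n) = d and q = CARD('a);
  vector space structure over 'a via the library interpretation vec (scalar mult *s).\<close>

type_synonym ('a,'n) vsub = "('a^'n) set"

definition direct_sum_pair :: "('a::{field,finite}^'n) set \<Rightarrow> ('a^'n) set \<Rightarrow> bool" where
  "direct_sum_pair W U \<longleftrightarrow> W \<inter> U = {0} \<and> {w + u | w u. w \<in> W \<and> u \<in> U} = UNIV"

text \<open>The set Omega_k^1 of unordered pairs {W,U}, dim W = k, dim U = d-k, V = W (+) U.\<close>
definition Omega1 :: "nat \<Rightarrow> ('a::{field,finite}^'n::finite) set set set" where
  "Omega1 k = {{W, U} | W U. vec.subspace W \<and> vec.subspace U \<and> vec.dim W = k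
                 \<and> vec.dim U = CARD('n) - k \<and> direct_sum_pair W U}"

text \<open>Permutation of Omega induced by a map on subspaces (extensional, as in BijGroup).\<close>
definition induced :: "('a set \<Rightarrow> 'a set) \<Rightarrow> 'a set set set \<Rightarrow> ('a set set \<Rightarrow> 'a set set)" where
  "induced h Om = (\<lambda>P\<in>Om. h ` P)"

text \<open>Field automorphisms and semilinear bijections of V.\<close>
definition field_aut :: "('a::field \<Rightarrow> 'a) \<Rightarrow> bool" where
  "field_aut s \<longleftrightarrow> bij s \<and> (\<forall>a b. s (a + b) = s a + s b) \<and> (\<forall>a b. s (a * b) = s a * s b)"

definition semilinear_bij :: "('a::field^'n \<Rightarrow> 'a^'n) \<Rightarrow> bool" where
  "semilinear_bij g \<longleftrightarrow> bij g \<and> (\<exists>s. field_aut s \<and>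
     (\<forall>x y. g (x + y) = g x + g y) \<and> (\<forall>c x. g (c *s x) = s c *s g x))"

text \<open>Standard polarity: orthogonal complement w.r.t. the standard bilinear form.\<close>
definition perp :: "('a::field^'n) set \<Rightarrow> ('a^'n) set" where
  "perp W = {x. \<forall>w\<in>W. (\<Sum>i\<in>UNIV. x $ i * w $ i) = 0}"

text \<open>PSL_d(q), PGammaL_d(q) and Aut(PSL_d(q)) = PGammaL_d(q) semidirect <iota>, as permutation
  groups on Omega_k^1 (the actions are faithful).\<close>
definition PSL_on :: "nat \<Rightarrow> (('a::{field,finite}^'n::finite) set set \<Rightarrow> ('a^'n) set set) set" where
  "PSL_on k = {induced (image (\<lambda>x. A *v x)) (Omega1 k) | A :: 'a^'n^'n. det A = 1}"

definition PGammaL_on :: "nat \<Rightarrow> (('a::{field,finite}^'n::finite) set set \<Rightarrow> ('a^'n) set set) set" where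
  "PGammaL_on k = {induced (image g) (Omega1 k) | g :: 'a^'n \<Rightarrow> 'a^'n. semilinear_bij g}"

definition iota_on :: "nat \<Rightarrow> (('a::{field,finite}^'n::finite) set set \<Rightarrow> ('a^'n) set set)" where
  "iota_on k = induced perp (Omega1 k)"

definition Aut_on :: "nat \<Rightarrow> (('a::{field,finite}^'n::finite) set set \<Rightarrow> ('a^'n) set set) set" where
  "Aut_on k = PGammaL_on k \<union> {compose (Omega1 k) (iota_on k) g | g. g \<in> PGammaL_on k}"

text \<open>Bases, irredundant bases, IBIS for a permutation group G on Om.\<close>
definition pw_stab :: "('b \<Rightarrow> 'b) set \<Rightarrow> 'b list \<Rightarrow> ('b \<Rightarrow> 'b) set" where
  "pw_stab G B = {g \<in> G. \<forall>b \<in> set B. g b = b}"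

definition is_base :: "'b set \<Rightarrow> ('b \<Rightarrow> 'b) set \<Rightarrow> 'b list \<Rightarrow> bool" where
  "is_base Om G B \<longleftrightarrow> set B \<subseteq> Om \<and> pw_stab G B = {\<lambda>x\<in>Om. x}"

definition irredundant_base :: "'b set \<Rightarrow> ('b \<Rightarrow> 'b) set \<Rightarrow> 'b list \<Rightarrow> bool" where
  "irredundant_base Om G B \<longleftrightarrow> is_base Om G B \<and>
     (\<forall>i < length B. pw_stab G (take (Suc i) B) \<subset> pw_stab G (take i B))"

definition IBIS :: "'b set \<Rightarrow> ('b \<Rightarrow> 'b) set \<Rightarrow> bool" where
  "IBIS Om G \<longleftrightarrow> (\<forall>B B'. irredundant_base Om G B \<and> irredundant_base Om G B' \<longrightarrow> length B = length B')"

end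

theory Submission
  imports Defs
begin


definition cs :: "('b \<Rightarrow> 'b) set \<Rightarrow> 'b list \<Rightarrow> bool" where
  "cs G L \<longleftrightarrow> (\<forall>i < length L. pw_stab G (take (Suc i) L) \<subset> pw_stab G (take i L))"

lemma irr_iff: "irredundant_base Om G B \<longleftrightarrow> is_base Om G B \<and> cs G B"
  unfolding irredundant_base_def cs_def by simp

lemma pw_stab_append: "pw_stab G (xs @ ys) = pw_stab G xs \<inter> pw_stab G ys"
  unfolding pw_stab_def by auto

lemma pw_stab_snoc_sub: "pw_stab G (xs @ [b]) \<subseteq> pw_stab G xs"
  unfolding pw_stab_def by auto

lemma cs_Nil: "cs G []" unfolding cs_def by simp

lemma cs_snoc:
  assumes "cs G acc" "pw_stab G (acc @ [b]) \<subset> pw_stab G acc"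
  shows "cs G (acc @ [b])"
  unfolding cs_def
proof (intro allI impI)
  fix i assume i: "i < length (acc @ [b])"
  show "pw_stab G (take (Suc i) (acc @ [b])) \<subset> pw_stab G (take i (acc @ [b]))"
  proof (cases "i < length acc")
    case True
    then show ?thesis using assms(1) unfolding cs_def by simp
  next
    case False
    then have "i = length acc" using i by simp
    then show ?thesis using assms(2) by simp
  qed
qed

fun gr :: "('b \<Rightarrow> 'b) set \<Rightarrow> 'b list \<Rightarrow> 'b list \<Rightarrow> 'b list" where
  "gr G acc [] = acc"
| "gr G acc (b # bs) = (if pw_stab G (acc @ [b]) \<subset> pw_stab G acc
      then gr G (acc @ [b]) bs else gr G acc bs)"

lemma gr_prefix: "\<exists>R. gr G acc bs = acc @ R \<and> length R \<le> length bs \<and> set R \<subseteq> set bs"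
proof (induction bs arbitrary: acc)
  case Nil then show ?case by simp
next
  case (Cons b bs)
  show ?case
  proof (cases "pw_stab G (acc @ [b]) \<subset> pw_stab G acc")
    case True
    obtain R where "gr G (acc @ [b]) bs = (acc @ [b]) @ R" "length R \<le> length bs" "set R \<subseteq> set bs"
      using Cons.IH by blast
    then show ?thesis using True by (intro exI[of _ "b # R"]) auto
  next
    case False
    obtain R where "gr G acc bs = acc @ R" "length R \<le> length bs" "set R \<subseteq> set bs"
      using Cons.IH by blast
    then show ?thesis using False by (intro exI[of _ R]) auto
  qed
qed

lemma gr_stab: "pw_stab G (gr G acc bs) = pw_stab G (acc @ bs)"
proof (induction bs arbitrary: acc)
  case Nil then show ?case by simp
next
  case (Cons b bs)
  show ?case
  proof (cases "pw_stab G (acc @ [b]) \<subset> pw_stab G acc")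
    case True
    then show ?thesis using Cons.IH[of "acc @ [b]"] by simp
  next
    case False
    then have eq: "pw_stab G (acc @ [b]) = pw_stab G acc" using pw_stab_snoc_sub[of G acc b] by blast
    have "pw_stab G (acc @ b # bs) = pw_stab G (acc @ [b]) \<inter> pw_stab G bs"
      using pw_stab_append[of G "acc @ [b]" bs] by simp
    also have "\<dots> = pw_stab G (acc @ bs)" using eq pw_stab_append[of G acc bs] by simp
    finally show ?thesis using False Cons.IH[of acc] by simp
  qed
qed

lemma gr_cs: "cs G acc \<Longrightarrow> cs G (gr G acc bs)"
proof (induction bs arbitrary: acc)
  case Nil then show ?case by simp
next
  case (Cons b bs)
  then show ?case using cs_snoc[of G acc b] by auto
qed

lemma not_IBIS_crit:
  assumes sg: "subgroup G (BijGroup Om)" and fin: "finite Om"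
    and X: "cs G X" "set X \<subseteq> Om" and Y: "set Y \<subseteq> Om"
    and len: "length Y < length X"
    and sub: "pw_stab G Y \<subseteq> pw_stab G X"
  shows "\<not> IBIS Om G"
proof
  assume ib: "IBIS Om G"
  let ?id = "(\<lambda>x\<in>Om. x)"
  have idG: "?id \<in> G"
    using subgroup.one_closed[OF sg] by (simp add: BijGroup_def)
  have GB: "G \<subseteq> Bij Om"
    using subgroup.subset[OF sg] by (simp add: BijGroup_def)
  obtain R0 where R0: "set R0 = Om" using finite_list[OF fin] by blast
  have stabR0: "pw_stab G R0 \<subseteq> {?id}"
  proof
    fix g assume "g \<in> pw_stab G R0"
    then have g: "g \<in> G" "\<forall>b\<in>Om. g b = b" using R0 unfolding pw_stab_def by auto
    then have "g \<in> extensional Om" using GB Bij_imp_extensional by blast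
    then have "g = ?id" using g(2) by (intro extensionalityI[of _ Om]) auto
    then show "g \<in> {?id}" by simp
  qed
  have id_in: "\<And>L. set L \<subseteq> Om \<Longrightarrow> ?id \<in> pw_stab G L"
    using idG unfolding pw_stab_def by auto
  obtain R1 where R1: "gr G X R0 = X @ R1" "set R1 \<subseteq> set R0"
    using gr_prefix[of G X R0] by blast
  have stabBX: "pw_stab G (X @ R1) = {?id}"
  proof
    have "pw_stab G (X @ R1) = pw_stab G (X @ R0)" using gr_stab[of G X R0] R1 by simp
    also have "\<dots> \<subseteq> {?id}" using stabR0 pw_stab_append[of G X R0] by auto
    finally show "pw_stab G (X @ R1) \<subseteq> {?id}" .
    show "{?id} \<subseteq> pw_stab G (X @ R1)" using id_in[of "X @ R1"] X(2) R1(2) R0 by auto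
  qed
  have irrX: "irredundant_base Om G (X @ R1)"
    unfolding irr_iff is_base_def
    using stabBX gr_cs[OF X(1), of R0] R1 X(2) R0 by auto
  obtain R2 where R2: "gr G [] (Y @ R1) = R2" "length R2 \<le> length (Y @ R1)" "set R2 \<subseteq> set (Y @ R1)"
    using gr_prefix[of G "[]" "Y @ R1"] by auto
  have stabBY: "pw_stab G R2 = {?id}"
  proof
    have "pw_stab G R2 = pw_stab G (Y @ R1)" using gr_stab[of G "[]" "Y @ R1"] R2(1) by simp
    also have "\<dots> \<subseteq> pw_stab G (X @ R1)" using sub pw_stab_append by blast
    finally show "pw_stab G R2 \<subseteq> {?id}" using stabBX by simp
    show "{?id} \<subseteq> pw_stab G R2" using id_in[of R2] R2(3) Y R1(2) R0 by auto
  qed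
  have irrY: "irredundant_base Om G R2"
    unfolding irr_iff is_base_def
    using stabBY gr_cs[OF cs_Nil, of G "Y @ R1"] R2 Y R1(2) R0 by auto
  have "length R2 = length (X @ R1)" using ib irrX irrY unfolding IBIS_def by blast
  then show False using R2(2) len by simp
qed



definition coord :: "'n set \<Rightarrow> ('a::field^'n) set" where
  "coord S = {x. \<forall>i. i \<notin> S \<longrightarrow> x $ i = 0}"

definition msum :: "('a::field^'n) set \<Rightarrow> ('a^'n) set \<Rightarrow> ('a^'n) set" where
  "msum X Y = {x + y | x y. x \<in> X \<and> y \<in> Y}"

lemma subspace_coord: "vec.subspace (coord S)"
  unfolding coord_def using subspace_substandard_cart[of "\<lambda>i. i \<notin> S"] by simp

lemma dim_coord: "vec.dim (coord S :: ('a::field^'n::finite) set) = card S"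
  unfolding coord_def by (rule dim_substandard_cart)

lemma card_coord: "card (coord S :: ('a::{field,finite}^'n::finite) set) = CARD('a) ^ card S"
proof -
  have "bij_betw (\<lambda>x. restrict (\<lambda>i. x $ i) S) (coord S :: ('a^'n) set) (PiE S (\<lambda>_. UNIV))"
  proof (rule bij_betw_byWitness[where f' = "\<lambda>f. \<chi> i. if i \<in> S then f i else 0"])
    show "\<forall>a\<in>coord S. (\<chi> i. if i \<in> S then restrict (\<lambda>i. a $ i) S i else 0) = (a :: 'a^'n)"
      unfolding coord_def by (auto simp: vec_eq_iff)
    show "\<forall>a'\<in>PiE S (\<lambda>_. UNIV). restrict (\<lambda>i. (\<chi> i. if i \<in> S then a' i else 0) $ i) S = (a' :: 'n \<Rightarrow> 'a)"
      by (auto simp: PiE_def extensional_def restrict_def fun_eq_iff)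
    show "(\<lambda>x. restrict (\<lambda>i. x $ i) S) ` coord S \<subseteq> PiE S (\<lambda>_. UNIV)" by auto
    show "(\<lambda>f. \<chi> i. if i \<in> S then f i else 0) ` PiE S (\<lambda>_. UNIV) \<subseteq> (coord S :: ('a^'n) set)"
      unfolding coord_def by auto
  qed
  then have "card (coord S :: ('a^'n) set) = card (PiE S (\<lambda>_. (UNIV :: 'a set)))"
    by (rule bij_betw_same_card)
  also have "\<dots> = CARD('a) ^ card S" by (simp add: card_PiE)
  finally show ?thesis .
qed

lemma card_subspace:
  assumes "vec.subspace (W :: ('a::{field,finite}^'n::finite) set)"
  shows "card W = CARD('a) ^ vec.dim W"
proof -
  have "vec.dim W \<le> vec.dim (UNIV :: ('a^'n) set)" by (rule vec.dim_subset) simp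
  also have "\<dots> = CARD('n)" using dim_coord[of "UNIV :: 'n set", where 'a='a] by (simp add: coord_def)
  finally obtain S :: "'n set" where S: "card S = vec.dim W"
    using obtain_subset_with_card_n by (metis finite UNIV_I subset_iff card_mono)
  have dd: "vec.dim W = vec.dim (coord S :: ('a^'n) set)" by (metis dim_coord S)
  obtain f where f: "Vector_Spaces.linear (*s) (*s) f" "f ` W = coord S" "inj_on f W"
    using vec.subspace_isomorphism[OF assms subspace_coord dd] by blast
  have "card W = card (coord S :: ('a^'n) set)" using f card_image by metis
  then show ?thesis using card_coord S by metis
qed



lemma perp_coord: "perp (coord S :: ('a::field^'n::finite) set) = coord (- S)"
proof
  show "perp (coord S) \<subseteq> (coord (- S) :: ('a^'n) set)"
  proof
    fix x :: "'a^'n" assume x: "x \<in> perp (coord S)"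
    show "x \<in> coord (- S)" unfolding coord_def mem_Collect_eq
    proof (intro allI impI)
      fix i assume "i \<notin> - S"
      then have "axis i 1 \<in> (coord S :: ('a^'n) set)" unfolding coord_def axis_def by auto
      then have "(\<Sum>j\<in>UNIV. x $ j * axis i 1 $ j) = 0" using x unfolding perp_def by blast
      moreover have "(\<Sum>j\<in>UNIV. x $ j * axis i (1::'a) $ j) = x $ i"
        unfolding axis_def by (simp add: if_distrib cong: if_cong)
      ultimately show "x $ i = 0" by simp
    qed
  qed
  show "coord (- S) \<subseteq> perp (coord S :: ('a^'n) set)"
    unfolding coord_def perp_def
  proof (clarsimp)
    fix x w :: "'a^'n" assume x: "\<forall>i. i \<in> S \<longrightarrow> x $ i = 0" and w: "\<forall>i. i \<notin> S \<longrightarrow> w $ i = 0"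
    show "(\<Sum>j\<in>UNIV. x $ j * w $ j) = 0"
    proof (rule sum.neutral, rule ballI)
      fix j show "x $ j * w $ j = 0" using x w by (cases "j \<in> S") auto
    qed
  qed
qed

lemma sub_perp_perp: "X \<subseteq> perp (perp X)"
  unfolding perp_def by (auto simp: mult.commute)

lemma field_aut_0: "field_aut s \<Longrightarrow> s 0 = 0"
  unfolding field_aut_def by (metis add_cancel_right_right add_0)

lemma semilinear_props:
  assumes "semilinear_bij h"
  obtains s where "field_aut s" "bij h" "\<And>x y. h (x + y) = h x + h y"
    "\<And>c x. h (c *s x) = s c *s h x"
  using assms unfolding semilinear_bij_def by blast

lemma semilinear_0: "semilinear_bij h \<Longrightarrow> h 0 = 0"
  by (metis semilinear_props add_cancel_right_right add_0)

lemma semilinear_inj: "semilinear_bij h \<Longrightarrow> inj h"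
  by (metis semilinear_props bij_is_inj)

lemma semilinear_subspace:
  assumes h: "semilinear_bij h" and W: "vec.subspace W"
  shows "vec.subspace (h ` W)"
proof -
  obtain s where s: "field_aut s" "bij h" "\<And>x y. h (x + y) = h x + h y"
    "\<And>c x. h (c *s x) = s c *s h x" using semilinear_props[OF h] by blast
  have sb: "surj s" using s(1) unfolding field_aut_def bij_def by blast
  show ?thesis unfolding vec.subspace_def
  proof (intro conjI ballI allI)
    show "0 \<in> h ` W" using W semilinear_0[OF h] vec.subspace_0 by (metis image_eqI)
    fix x y assume "x \<in> h ` W" "y \<in> h ` W"
    then obtain a b where "a \<in> W" "b \<in> W" "x = h a" "y = h b" by blast
    then show "x + y \<in> h ` W" using s(3) W vec.subspace_add by (metis image_eqI)
  next
    fix c x assume "x \<in> h ` W"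
    then obtain a where a: "a \<in> W" "x = h a" by blast
    obtain c' where "c = s c'" using sb by (metis surjD)
    then have "c *s x = h (c' *s a)" using s(4) a by simp
    then show "c *s x \<in> h ` W" using W vec.subspace_scale a(1) by (metis image_eqI)
  qed
qed

lemma card_gt1: "1 < CARD('a::{field,finite})"
proof -
  have "{0, 1::'a} \<subseteq> UNIV" by simp
  then have "card {0, 1::'a} \<le> CARD('a)" by (rule card_mono[OF finite])
  then show ?thesis by simp
qed

lemma semilinear_dim:
  assumes h: "semilinear_bij (h :: ('a::{field,finite}^'n::finite) \<Rightarrow> _)" and W: "vec.subspace W"
  shows "vec.dim (h ` W) = vec.dim W"
proof -
  have "card (h ` W) = card W" using semilinear_inj[OF h] by (simp add: card_image inj_on_subset)
  then have "CARD('a) ^ vec.dim (h ` W) = CARD('a) ^ vec.dim W"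
    using card_subspace[OF W] card_subspace[OF semilinear_subspace[OF h W]] by simp
  then show ?thesis using card_gt1[where 'a='a] by (simp add: power_inject_exp)
qed

lemma image_msum:
  assumes "\<And>x y. h (x + y) = h x + h y"
  shows "h ` msum X Y = msum (h ` X) (h ` Y)"
proof (rule Set.set_eqI)
  fix z
  show "z \<in> h ` msum X Y \<longleftrightarrow> z \<in> msum (h ` X) (h ` Y)"
  proof
    assume "z \<in> h ` msum X Y"
    then obtain x y where "x \<in> X" "y \<in> Y" "z = h (x + y)" unfolding msum_def by blast
    then show "z \<in> msum (h ` X) (h ` Y)" unfolding msum_def using assms by blast
  next
    assume "z \<in> msum (h ` X) (h ` Y)"
    then obtain x y where xy: "x \<in> X" "y \<in> Y" "z = h x + h y" unfolding msum_def by blast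
    then have "z = h (x + y)" using assms by simp
    moreover have "x + y \<in> msum X Y" using xy unfolding msum_def by blast
    ultimately show "z \<in> h ` msum X Y" by blast
  qed
qed

lemma semilinear_msum: "semilinear_bij h \<Longrightarrow> h ` msum X Y = msum (h ` X) (h ` Y)"
  by (metis semilinear_props image_msum)

lemma semilinear_direct:
  assumes h: "semilinear_bij h" and d: "direct_sum_pair W U"
  shows "direct_sum_pair (h ` W) (h ` U)"
proof -
  have i: "inj h" using semilinear_inj[OF h] .
  have s: "surj h" using h unfolding semilinear_bij_def bij_def by blast
  have "h ` W \<inter> h ` U = h ` (W \<inter> U)" using i by (simp add: image_Int)
  also have "\<dots> = {0}" using d semilinear_0[OF h] unfolding direct_sum_pair_def by simp
  finally have 1: "h ` W \<inter> h ` U = {0}" .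
  have "msum W U = UNIV" using d unfolding direct_sum_pair_def msum_def by simp
  then have "msum (h ` W) (h ` U) = UNIV" using semilinear_msum[OF h, of W U] s by simp
  then show ?thesis using 1 unfolding direct_sum_pair_def msum_def by simp
qed

lemma semilinear_Omega:
  assumes h: "semilinear_bij h" and P: "P \<in> (Omega1 k :: ('a::{field,finite}^'n::finite) set set set)"
  shows "image h ` P \<in> Omega1 k"
proof -
  obtain W U where WU: "P = {W, U}" "vec.subspace W" "vec.subspace U" "vec.dim W = k"
    "vec.dim U = CARD('n) - k" "direct_sum_pair W U" using P unfolding Omega1_def by blast
  have e: "image h ` P = {h ` W, h ` U}" using WU(1) by simp
  have "vec.subspace (h ` W)" "vec.subspace (h ` U)" "vec.dim (h ` W) = k"
    "vec.dim (h ` U) = CARD('n) - k" "direct_sum_pair (h ` W) (h ` U)"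
    using WU semilinear_subspace[OF h] semilinear_dim[OF h] semilinear_direct[OF h] by simp_all
  then show ?thesis unfolding Omega1_def e by blast
qed



definition Dl :: "'n set \<Rightarrow> ('n \<Rightarrow> 'n) \<Rightarrow> ('a::field^'n) set" where
  "Dl A \<phi> = {x. (\<forall>i. i \<notin> A \<union> \<phi> ` A \<longrightarrow> x $ i = 0) \<and> (\<forall>i\<in>A. x $ (\<phi> i) = x $ i)}"

lemma subspace_Dl: "vec.subspace (Dl A \<phi>)"
  unfolding vec.subspace_def Dl_def by auto

lemma card_Dl:
  assumes inj: "inj_on \<phi> A" and disj: "A \<inter> \<phi> ` A = {}"
  shows "card (Dl A \<phi> :: ('a::{field,finite}^'n::finite) set) = card (coord A :: ('a^'n) set)"
proof -
  let ?f = "\<lambda>x::'a^'n. \<chi> i. if i \<in> A then x $ i else 0"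
  let ?g = "\<lambda>y::'a^'n. \<chi> i. if i \<in> A then y $ i else if i \<in> \<phi> ` A then y $ (inv_into A \<phi> i) else 0"
  have iv: "\<And>a. a \<in> A \<Longrightarrow> inv_into A \<phi> (\<phi> a) = a" using inj by simp
  have iv2: "\<And>i. i \<in> \<phi> ` A \<Longrightarrow> inv_into A \<phi> i \<in> A \<and> \<phi> (inv_into A \<phi> i) = i"
    by (simp add: f_inv_into_f inv_into_into)
  have "bij_betw ?f (Dl A \<phi>) (coord A)"
  proof (rule bij_betw_byWitness[where f' = ?g])
    show "\<forall>x\<in>Dl A \<phi>. ?g (?f x) = x"
    proof
      fix x :: "'a^'n" assume x: "x \<in> Dl A \<phi>"
      show "?g (?f x) = x" unfolding vec_eq_iff
      proof
        fix i
        show "?g (?f x) $ i = x $ i"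
        proof (cases "i \<in> A")
          case True then show ?thesis by simp
        next
          case F: False
          show ?thesis
          proof (cases "i \<in> \<phi> ` A")
            case True
            then have "?g (?f x) $ i = x $ (inv_into A \<phi> i)" using F iv2 by simp
            also have "\<dots> = x $ (\<phi> (inv_into A \<phi> i))" using x iv2[OF True] unfolding Dl_def by auto
            also have "\<dots> = x $ i" using iv2[OF True] by simp
            finally show ?thesis .
          next
            case False then show ?thesis using F x unfolding Dl_def by auto
          qed
        qed
      qed
    qed
    show "\<forall>y\<in>coord A. ?f (?g y) = y"
    proof
      fix y :: "'a^'n" assume y: "y \<in> coord A"
      show "?f (?g y) = y" unfolding vec_eq_iff
      proof
        fix i show "?f (?g y) $ i = y $ i" using y unfolding coord_def by (cases "i \<in> A") simp_all
      qed
    qed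
    show "?f ` Dl A \<phi> \<subseteq> coord A"
    proof
      fix z assume "z \<in> ?f ` Dl A \<phi>"
      then obtain x where "z = ?f x" by blast
      then show "z \<in> coord A" unfolding coord_def by simp
    qed
    show "?g ` coord A \<subseteq> Dl A \<phi>"
    proof
      fix z assume "z \<in> ?g ` coord A"
      then obtain y where y: "y \<in> coord A" "z = ?g y" by blast
      have "\<forall>i. i \<notin> A \<union> \<phi> ` A \<longrightarrow> z $ i = 0" using y by simp
      moreover have "\<forall>i\<in>A. z $ (\<phi> i) = z $ i"
      proof
        fix i assume i: "i \<in> A"
        have "\<phi> i \<notin> A" using i disj by blast
        then show "z $ (\<phi> i) = z $ i" using y i iv by simp
      qed
      ultimately show "z \<in> Dl A \<phi>" unfolding Dl_def by blast
    qed
  qed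
  then show ?thesis by (rule bij_betw_same_card)
qed

lemma dim_Dl:
  assumes inj: "inj_on \<phi> A" and disj: "A \<inter> \<phi> ` A = {}"
  shows "vec.dim (Dl A \<phi> :: ('a::{field,finite}^'n::finite) set) = card A"
proof -
  have "CARD('a) ^ vec.dim (Dl A \<phi> :: ('a^'n) set) = CARD('a) ^ card A"
    using card_subspace[OF subspace_Dl] card_Dl[OF inj disj] card_coord by metis
  then show ?thesis using card_gt1[where 'a='a] by (simp add: power_inject_exp)
qed

lemma direct_coord: "direct_sum_pair (coord S) (coord (- S) :: ('a::{field,finite}^'n::finite) set)"
  unfolding direct_sum_pair_def
proof
  show "coord S \<inter> coord (- S) = {0::'a^'n}"
  proof
    show "coord S \<inter> coord (- S) \<subseteq> {0::'a^'n}"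
    proof
      fix x :: "'a^'n" assume x: "x \<in> coord S \<inter> coord (- S)"
      have "\<And>i. x $ i = 0"
      proof -
        fix i show "x $ i = 0" using x unfolding coord_def by (cases "i \<in> S") simp_all
      qed
      then show "x \<in> {0}" by (simp add: vec_eq_iff)
    qed
    show "{0::'a^'n} \<subseteq> coord S \<inter> coord (- S)" unfolding coord_def by simp
  qed
  have "\<And>v::'a^'n. v \<in> {w + u |w u. w \<in> coord S \<and> u \<in> coord (- S)}"
  proof -
    fix v :: "'a^'n"
    let ?w = "\<chi> i. if i \<in> S then v $ i else 0"
    let ?u = "\<chi> i. if i \<in> S then 0 else v $ i"
    have "v = ?w + ?u" "?w \<in> coord S" "?u \<in> coord (- S)" unfolding coord_def by (auto simp: vec_eq_iff)
    then show "v \<in> {w + u |w u. w \<in> coord S \<and> u \<in> coord (- S)}" by blast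
  qed
  then show "{w + u |w u. w \<in> coord S \<and> u \<in> coord (- S)} = (UNIV :: ('a^'n) set)" by blast
qed

definition wv :: "'n set \<Rightarrow> ('n \<Rightarrow> 'n) \<Rightarrow> ('a::field^'n) \<Rightarrow> ('a^'n)" where
  "wv A \<phi> v = (\<chi> i. if i \<in> A then v $ (\<phi> i) else if i \<in> \<phi> ` A then v $ i else 0)"

lemma wv_Dl:
  assumes disj: "A \<inter> \<phi> ` A = {}"
  shows "wv A \<phi> v \<in> Dl A \<phi>"
proof -
  have "\<And>i. i \<in> A \<Longrightarrow> \<phi> i \<notin> A" using disj by blast
  then show ?thesis unfolding Dl_def wv_def by auto
qed

lemma direct_Dl:
  assumes inj: "inj_on \<phi> A" and disj: "A \<inter> \<phi> ` A = {}"
  shows "direct_sum_pair (Dl A \<phi>) (coord (- (\<phi> ` A)) :: ('a::{field,finite}^'n::finite) set)"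
  unfolding direct_sum_pair_def
proof
  show "Dl A \<phi> \<inter> coord (- (\<phi> ` A)) = {0::'a^'n}"
  proof
    show "Dl A \<phi> \<inter> coord (- (\<phi> ` A)) \<subseteq> {0::'a^'n}"
    proof
      fix x :: "'a^'n" assume x: "x \<in> Dl A \<phi> \<inter> coord (- (\<phi> ` A))"
      have "\<And>i. x $ i = 0"
      proof -
        fix i
        show "x $ i = 0"
        proof (cases "i \<in> A")
          case True
          then have "x $ i = x $ (\<phi> i)" using x unfolding Dl_def by auto
          also have "\<dots> = 0" using x True unfolding coord_def by auto
          finally show ?thesis .
        next
          case False then show ?thesis using x unfolding Dl_def coord_def by auto
        qed
      qed
      then show "x \<in> {0}" by (simp add: vec_eq_iff)
    qed
    show "{0::'a^'n} \<subseteq> Dl A \<phi> \<inter> coord (- (\<phi> ` A))" unfolding Dl_def coord_def by auto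
  qed
  have "\<And>v::'a^'n. v \<in> {w + u |w u. w \<in> Dl A \<phi> \<and> u \<in> coord (- (\<phi> ` A))}"
  proof -
    fix v :: "'a^'n"
    have "\<And>i. i \<in> A \<Longrightarrow> i \<notin> \<phi> ` A" using disj by blast
    then have "v - wv A \<phi> v \<in> coord (- (\<phi> ` A))" unfolding coord_def wv_def by auto
    moreover have "v = wv A \<phi> v + (v - wv A \<phi> v)" by simp
    ultimately show "v \<in> {w + u |w u. w \<in> Dl A \<phi> \<and> u \<in> coord (- (\<phi> ` A))}"
      using wv_Dl[OF disj, of v] by blast
  qed
  then show "{w + u |w u. w \<in> Dl A \<phi> \<and> u \<in> coord (- (\<phi> ` A))} = (UNIV :: ('a^'n) set)" by blast
qed

lemma lattice_Dl:
  assumes disj: "A \<inter> \<phi> ` A = {}"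
  shows "msum (coord A) (Dl A \<phi>) \<inter> coord (- A) = (coord (\<phi> ` A) :: ('a::field^'n) set)"
proof
  show "msum (coord A) (Dl A \<phi>) \<inter> coord (- A) \<subseteq> (coord (\<phi> ` A) :: ('a^'n) set)"
  proof
    fix z :: "'a^'n" assume z: "z \<in> msum (coord A) (Dl A \<phi>) \<inter> coord (- A)"
    then obtain x y where xy: "x \<in> coord A" "y \<in> Dl A \<phi>" "z = x + y" unfolding msum_def by blast
    show "z \<in> coord (\<phi> ` A)" unfolding coord_def
    proof (intro CollectI allI impI)
      fix i assume i: "i \<notin> \<phi> ` A"
      show "z $ i = 0"
      proof (cases "i \<in> A")
        case True then show ?thesis using z unfolding coord_def by auto
      next
        case False then show ?thesis using xy i unfolding coord_def Dl_def by auto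
      qed
    qed
  qed
  show "(coord (\<phi> ` A) :: ('a^'n) set) \<subseteq> msum (coord A) (Dl A \<phi>) \<inter> coord (- A)"
  proof
    fix v :: "'a^'n" assume v: "v \<in> coord (\<phi> ` A)"
    have nA: "\<And>i. i \<in> A \<Longrightarrow> i \<notin> \<phi> ` A" using disj by blast
    have "v - wv A \<phi> v \<in> coord A" using v unfolding coord_def wv_def by auto
    moreover have "v = (v - wv A \<phi> v) + wv A \<phi> v" by simp
    ultimately have "v \<in> msum (coord A) (Dl A \<phi>)" using wv_Dl[OF disj, of v] unfolding msum_def by blast
    moreover have "v \<in> coord (- A)" using v nA unfolding coord_def by auto
    ultimately show "v \<in> msum (coord A) (Dl A \<phi>) \<inter> coord (- A)" by blast
  qed
qed

lemma lattice_coord: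
  assumes disj: "A \<inter> B = {}"
  shows "msum (coord A) (coord B) \<inter> coord (- A) = (coord B :: ('a::field^'n) set)"
proof
  show "msum (coord A) (coord B) \<inter> coord (- A) \<subseteq> (coord B :: ('a^'n) set)"
  proof
    fix z :: "'a^'n" assume z: "z \<in> msum (coord A) (coord B) \<inter> coord (- A)"
    then obtain x y where xy: "x \<in> coord A" "y \<in> coord B" "z = x + y" unfolding msum_def by blast
    show "z \<in> coord B" unfolding coord_def
    proof (intro CollectI allI impI)
      fix i assume i: "i \<notin> B"
      show "z $ i = 0"
      proof (cases "i \<in> A")
        case True then show ?thesis using z unfolding coord_def by auto
      next
        case False then show ?thesis using xy i unfolding coord_def by auto
      qed
    qed
  qed
  show "(coord B :: ('a^'n) set) \<subseteq> msum (coord A) (coord B) \<inter> coord (- A)"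
  proof
    fix v :: "'a^'n" assume v: "v \<in> coord B"
    have "v = 0 + v" by simp
    moreover have "(0::'a^'n) \<in> coord A" unfolding coord_def by simp
    ultimately have "v \<in> msum (coord A) (coord B)" using v unfolding msum_def by blast
    moreover have "v \<in> coord (- A)" using v disj unfolding coord_def by auto
    ultimately show "v \<in> msum (coord A) (coord B) \<inter> coord (- A)" by blast
  qed
qed

definition uv :: "'n \<Rightarrow> 'n \<Rightarrow> 'a::field^'n" where
  "uv a b = (\<chi> j. if j = a \<or> j = b then 1 else 0)"

lemma uv_nth: "uv a b $ j = (if j = a \<or> j = b then 1 else 0)"
  unfolding uv_def by simp

lemma uv_Dl:
  assumes inj: "inj_on \<phi> A" and disj: "A \<inter> \<phi> ` A = {}" and a0: "a0 \<in> A"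
  shows "uv a0 (\<phi> a0) \<in> (Dl A \<phi> :: ('a::field^'n) set)"
proof -
  have 1: "\<forall>i\<in>A. (\<phi> i = a0 \<or> \<phi> i = \<phi> a0) = (i = a0 \<or> i = \<phi> a0)"
  proof
    fix i assume i: "i \<in> A"
    have "\<phi> i \<noteq> a0" "i \<noteq> \<phi> a0" using i a0 disj by blast+
    moreover have "\<phi> i = \<phi> a0 \<longleftrightarrow> i = a0" using inj i a0 unfolding inj_on_def by blast
    ultimately show "(\<phi> i = a0 \<or> \<phi> i = \<phi> a0) = (i = a0 \<or> i = \<phi> a0)" by blast
  qed
  have 2: "\<forall>i. i \<notin> A \<union> \<phi> ` A \<longrightarrow> \<not> (i = a0 \<or> i = \<phi> a0)" using a0 by blast
  have "\<forall>i\<in>A. (uv a0 (\<phi> a0) :: 'a^'n) $ (\<phi> i) = (uv a0 (\<phi> a0) :: 'a^'n) $ i"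
    using 1 unfolding uv_nth by presburger
  moreover have "\<forall>i. i \<notin> A \<union> \<phi> ` A \<longrightarrow> (uv a0 (\<phi> a0) :: 'a^'n) $ i = 0"
    using 2 unfolding uv_nth by presburger
  ultimately show ?thesis unfolding Dl_def by blast
qed

definition ev :: "'n \<Rightarrow> 'a::field^'n" where
  "ev b = (\<chi> j. if j = b then 1 else 0)"

lemma ev_nth: "ev b $ j = (if j = b then 1 else 0)"
  unfolding ev_def by simp

lemma coord_ne_Dl:
  assumes disj: "A \<inter> \<phi> ` A = {}" and a0: "a0 \<in> A"
  shows "coord (\<phi> ` A) \<noteq> (Dl A \<phi> :: ('a::field^'n) set)"
proof
  assume e: "coord (\<phi> ` A) = (Dl A \<phi> :: ('a::field^'n) set)"
  define b where "b = \<phi> a0"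
  have bA: "b \<in> \<phi> ` A" unfolding b_def using a0 by blast
  have ne: "a0 \<noteq> b" using a0 bA disj by blast
  have "\<forall>i. i \<notin> \<phi> ` A \<longrightarrow> (ev b :: 'a^'n) $ i = 0"
  proof (intro allI impI)
    fix i assume "i \<notin> \<phi> ` A"
    then have "i \<noteq> b" using bA by blast
    then show "(ev b :: 'a^'n) $ i = 0" unfolding ev_nth by simp
  qed
  then have "(ev b :: 'a^'n) \<in> coord (\<phi> ` A)" unfolding coord_def by blast
  then have "(ev b :: 'a^'n) \<in> Dl A \<phi>" unfolding e .
  then have "(ev b :: 'a^'n) $ (\<phi> a0) = (ev b :: 'a^'n) $ a0" using a0 unfolding Dl_def by blast
  then have "(ev b :: 'a^'n) $ b = (ev b :: 'a^'n) $ a0" unfolding b_def .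
  then show False unfolding ev_nth using ne by simp
qed



lemma L_pgl:
  assumes e: "{h ` W, h ` U} = {W, U}" and c: "card (h ` W) = card W" "card (h ` U) = card U"
    and ne: "card W \<noteq> card U"
  shows "h ` W = W \<and> h ` U = U"
  using e c ne unfolding doubleton_eq_iff by auto

lemma L_iota:
  fixes W U :: "('a::{field,finite}^'n::finite) set"
  assumes e: "{perp (h ` W), perp (h ` U)} = {W, U}" and inj: "inj h"
    and c1: "card (perp U) = card W" and c2: "card W < card U"
  shows "h ` W = perp U \<and> (card (perp W) = card U \<longrightarrow> h ` U = perp W)"
proof -
  have cW: "card (h ` W) = card W" and cU: "card (h ` U) = card U"
    using inj by (simp_all add: card_image inj_on_subset)
  have "\<not> (perp (h ` W) = W \<and> perp (h ` U) = U)"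
  proof
    assume a: "perp (h ` W) = W \<and> perp (h ` U) = U"
    have "h ` U \<subseteq> perp (perp (h ` U))" by (rule sub_perp_perp)
    then have "h ` U \<subseteq> perp U" using a by simp
    then have "card (h ` U) \<le> card (perp U)" by (intro card_mono) simp_all
    then show False using cU c1 c2 by simp
  qed
  then have b: "perp (h ` W) = U" "perp (h ` U) = W" using e unfolding doubleton_eq_iff by auto
  have "h ` W \<subseteq> perp (perp (h ` W))" by (rule sub_perp_perp)
  then have s1: "h ` W \<subseteq> perp U" using b by simp
  have 1: "h ` W = perp U" using card_subset_eq[OF _ s1] cW c1 by simp
  have "h ` U \<subseteq> perp (perp (h ` U))" by (rule sub_perp_perp)
  then have s2: "h ` U \<subseteq> perp W" using b by simp
  have "card (perp W) = card U \<longrightarrow> h ` U = perp W" using card_subset_eq[OF _ s2] cU by simp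
  then show ?thesis using 1 by simp
qed

lemma Aut_cases:
  assumes g: "g \<in> Aut_on k"
  obtains h where "semilinear_bij h"
    "\<forall>P\<in>(Omega1 k :: ('a::{field,finite}^'n::finite) set set set). g P = image h ` P"
  | h where "semilinear_bij h"
    "\<forall>P\<in>(Omega1 k :: ('a::{field,finite}^'n::finite) set set set). g P = perp ` (image h ` P)"
proof -
  consider (a) "g \<in> PGammaL_on k" | (b) g' where "g' \<in> PGammaL_on k" "g = compose (Omega1 k) (iota_on k) g'"
    using g unfolding Aut_on_def by blast
  then show ?thesis
  proof cases
    case a
    then obtain h where h: "semilinear_bij h" "g = induced (image h) (Omega1 k)"
      unfolding PGammaL_on_def by blast
    then show ?thesis using that(1)[OF h(1)] unfolding induced_def by simp
  next
    case b
    then obtain h where h: "semilinear_bij h" "g' = induced (image h) (Omega1 k)"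
      unfolding PGammaL_on_def by blast
    have "\<forall>P\<in>(Omega1 k :: ('a^'n) set set set). g P = perp ` (image h ` P)"
    proof
      fix P assume P: "P \<in> (Omega1 k :: ('a^'n) set set set)"
      have "image h ` P \<in> Omega1 k" using semilinear_Omega[OF h(1) P] .
      then show "g P = perp ` (image h ` P)"
        using P b(2) h(2) unfolding compose_def iota_on_def induced_def by simp
    qed
    then show ?thesis using that(2)[OF h(1)] by blast
  qed
qed

text \<open>Transvections and diagonal matrices.\<close>

definition tv :: "'n \<Rightarrow> 'n \<Rightarrow> 'a::field^'n^'n" where
  "tv i j = (\<chi> r. if r = i then row i (mat 1) + 1 *s row j (mat 1) else row r (mat 1))"

lemma det_tv: "i \<noteq> j \<Longrightarrow> det (tv i j :: 'a::field^'n::finite^'n) = 1"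
  unfolding tv_def using det_row_operation[of i j "mat 1" 1] by (simp add: det_I)

lemma sum_delta_mult: "(\<Sum>c\<in>(UNIV::'n::finite set). (if a = c then k else 0) * f c) = k * (f a :: 'a::field)"
proof -
  have "(\<Sum>c\<in>(UNIV::'n set). (if a = c then k else 0) * f c) = (\<Sum>c\<in>UNIV. if a = c then k * f c else 0)"
    by (rule sum.cong) auto
  also have "\<dots> = k * f a" using sum.delta'[of "UNIV::'n set" a "\<lambda>c. k * f c"] by simp
  finally show ?thesis .
qed

lemma tv_entry: "(tv i j :: 'a::field^'n::finite^'n) $ r $ c =
   (if r = i then (if i = c then 1 else 0) + (if j = c then 1 else 0) else (if r = c then 1 else 0))"
  by (simp add: tv_def row_def mat_def)

lemma tv_apply: "(tv i j *v x) $ r = (if r = i then x $ i + x $ j else x $ (r::'n::finite))"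
proof (cases "r = i")
  case True
  have "(tv i j *v x) $ r = (\<Sum>c\<in>UNIV. ((if i = c then 1 else 0) + (if j = c then 1 else 0)) * x $ c)"
    unfolding matrix_vector_mult_def using True by (simp add: tv_entry)
  also have "\<dots> = (\<Sum>c\<in>UNIV. (if i = c then 1 else 0) * x $ c) + (\<Sum>c\<in>UNIV. (if j = c then 1 else 0) * x $ c)"
    by (simp add: distrib_right sum.distrib)
  also have "\<dots> = x $ i + x $ j" by (simp only: sum_delta_mult mult_1)
  finally show ?thesis using True by simp
next
  case False
  have "(tv i j *v x) $ r = (\<Sum>c\<in>UNIV. (if r = c then 1 else 0) * x $ c)"
    unfolding matrix_vector_mult_def using False by (simp add: tv_entry)
  also have "\<dots> = x $ r" by (simp only: sum_delta_mult mult_1)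
  finally show ?thesis using False by simp
qed

lemma inj_tv: "i \<noteq> j \<Longrightarrow> inj ((*v) (tv i j :: 'a::field^'n::finite^'n))"
proof (rule injI)
  fix x y :: "'a^'n" assume ij: "i \<noteq> j" and e: "tv i j *v x = tv i j *v y"
  have o: "\<And>r. r \<noteq> i \<Longrightarrow> x $ r = y $ r" using e tv_apply by (metis (no_types))
  have "x $ i + x $ j = y $ i + y $ j" using e tv_apply[of i j x i] tv_apply[of i j y i] by metis
  then have "x $ i = y $ i" using o[of j] ij by simp
  then show "x = y" using o by (metis vec_eq_iff)
qed

definition dgm :: "('n \<Rightarrow> 'a::field) \<Rightarrow> 'a^'n^'n" where
  "dgm dd = (\<chi> r c. if r = c then dd r else 0)"

lemma dgm_apply: "(dgm dd *v x) $ r = dd r * x $ (r::'n::finite)"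
proof -
  have "(dgm dd *v x) $ r = (\<Sum>c\<in>UNIV. (if r = c then dd r else 0) * x $ c)"
    unfolding matrix_vector_mult_def dgm_def by simp
  also have "\<dots> = dd r * x $ r" by (rule sum_delta_mult)
  finally show ?thesis .
qed

lemma det_dgm: "det (dgm dd :: 'a::field^'n::finite^'n) = prod dd UNIV"
  using det_diagonal[of "dgm dd"] by (simp add: dgm_def)

lemma inj_dgm: "(\<And>r. dd r \<noteq> 0) \<Longrightarrow> inj ((*v) (dgm dd :: 'a::field^'n::finite^'n))"
proof (rule injI)
  fix x y :: "'a^'n" assume nz: "\<And>r. dd r \<noteq> 0" and e: "dgm dd *v x = dgm dd *v y"
  have "\<And>r. dd r * x $ r = dd r * y $ r" using e dgm_apply by metis
  then show "x = y" using nz by (simp add: vec_eq_iff)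
qed

lemma dgm_coord:
  assumes nz: "\<And>r. dd r \<noteq> 0"
  shows "(*v) (dgm dd) ` coord S = (coord S :: ('a::{field,finite}^'n::finite) set)"
proof (rule endo_inj_surj)
  show "(*v) (dgm dd) ` coord S \<subseteq> (coord S :: ('a^'n) set)"
    unfolding coord_def by (auto simp: dgm_apply)
  have "inj ((*v) (dgm dd :: 'a^'n^'n))" by (rule inj_dgm) (rule nz)
  then show "inj_on ((*v) (dgm dd)) (coord S)" by (rule inj_on_subset) simp
qed simp

lemma pair_moved: "f ` W \<noteq> W \<Longrightarrow> f ` W \<noteq> U \<Longrightarrow> {f ` W, f ` U} \<noteq> {W, U}"
  by (auto simp: doubleton_eq_iff)

lemma pair_moved2: "X \<noteq> W \<Longrightarrow> X \<noteq> U \<Longrightarrow> {Z, X} \<noteq> {W, U}"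
  by (auto simp: doubleton_eq_iff)



lemma field2_cases:
  assumes "CARD('a::{field,finite}) = 2"
  shows "(x::'a) = 0 \<or> x = 1"
proof -
  have "card {0, 1::'a} = 2" by simp
  then have "{0, 1::'a} = UNIV" using assms by (intro card_subset_eq) simp_all
  then show ?thesis by blast
qed

lemma field3_ex:
  assumes "CARD('a::{field,finite}) \<noteq> 2"
  shows "\<exists>l::'a. l \<noteq> 0 \<and> l \<noteq> 1"
proof (rule ccontr)
  assume "\<not> ?thesis"
  then have "UNIV = {0, 1::'a}" by blast
  then have "card (UNIV :: 'a set) = card {0, 1::'a}" by (rule arg_cong)
  then have "CARD('a) = 2" by simp
  then show False using assms by simp
qed

lemma iota_in_G:
  assumes sg: "subgroup G (BijGroup (Omega1 k :: ('a::{field,finite}^'n::finite) set set set))"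
    and psl: "PSL_on k \<subseteq> G" and aut: "G \<subseteq> Aut_on k" and ng: "\<not> G \<subseteq> PGammaL_on k"
    and q2: "CARD('a) = 2"
  shows "iota_on k \<in> G"
proof -
  let ?Om = "Omega1 k :: ('a^'n) set set set"
  obtain g where g: "g \<in> G" "g \<notin> PGammaL_on k" using ng by blast
  then obtain g' where g': "g' \<in> PGammaL_on k" "g = compose ?Om (iota_on k) g'"
    using aut unfolding Aut_on_def by blast
  then obtain h where h: "semilinear_bij h" "g' = induced (image h) ?Om"
    unfolding PGammaL_on_def by blast
  obtain s where s: "field_aut s" "bij h" "\<And>x y. h (x + y) = h x + h y"
    "\<And>c x. h (c *s x) = s c *s h x" using semilinear_props[OF h(1)] by blast
  have s0: "s 0 = 0" using field_aut_0[OF s(1)] .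
  have s1: "s 1 = 1"
  proof -
    have "s 1 \<noteq> s 0" using s(1) unfolding field_aut_def bij_def inj_def by (metis zero_neq_one)
    then show ?thesis using s0 field2_cases[OF q2, of "s 1"] by auto
  qed
  have sid: "\<And>c. s c = c" using s0 s1 field2_cases[OF q2] by metis
  have lin: "Vector_Spaces.linear (*s) (*s) h"
    unfolding Vector_Spaces.linear_iff using s(3,4) sid vec.vector_space_axioms by simp
  define M where "M = matrix h"
  have hM: "\<And>x. h x = M *v x" unfolding M_def using matrix_works[OF lin] by simp
  have "inj ((*v) M)" using s(2) hM unfolding bij_def by (metis inj_on_cong)
  then obtain Bm where Bm: "Bm ** M = mat 1" using matrix_left_invertible_injective by blast
  then have MB: "M ** Bm = mat 1" using matrix_left_right_inverse by blast
  have "det Bm * det M = 1" using det_mul[of Bm M] Bm by (simp add: det_I)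
  then have "det Bm \<noteq> 0" by auto
  then have dB: "det Bm = 1" using field2_cases[OF q2, of "det Bm"] by auto
  define f where "f = induced (image (\<lambda>x. Bm *v x)) ?Om"
  have fP: "f \<in> PSL_on k" unfolding f_def PSL_on_def using dB by blast
  then have fG: "f \<in> G" using psl by blast
  have GB: "G \<subseteq> Bij ?Om" using subgroup.subset[OF sg] by (simp add: BijGroup_def)
  have prod: "g \<otimes>\<^bsub>BijGroup ?Om\<^esub> f \<in> G" using subgroup.m_closed[OF sg g(1) fG] .
  have "g \<otimes>\<^bsub>BijGroup ?Om\<^esub> f = compose ?Om g f" using GB g(1) fG by (auto simp: BijGroup_def)
  also have "\<dots> = iota_on k"
  proof (rule ext)
    fix P
    show "compose ?Om g f P = iota_on k P"
    proof (cases "P \<in> ?Om")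
      case True
      have fPO: "f P \<in> ?Om" using GB fG True Bij_imp_funcset by blast
      have "image h ` (f P) = P"
      proof -
        have "\<And>W. h ` ((\<lambda>x. Bm *v x) ` W) = W"
        proof -
          fix W :: "('a^'n) set"
          have "h ` ((\<lambda>x. Bm *v x) ` W) = (\<lambda>x. h (Bm *v x)) ` W" by (simp add: image_image)
          also have "\<dots> = W" using hM MB by (simp add: matrix_vector_mul_assoc)
          finally show "h ` ((\<lambda>x. Bm *v x) ` W) = W" .
        qed
        then show ?thesis using True unfolding f_def induced_def by (simp add: image_image)
      qed
      then show ?thesis using True fPO g'(2) h(2) unfolding compose_def induced_def iota_on_def by simp
    next
      case False
      then show ?thesis unfolding compose_def iota_on_def induced_def by simp
    qed
  qed
  finally show ?thesis using prod by simp
qed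



lemma Omega_mem:
  assumes "vec.subspace W" "vec.subspace U" "vec.dim W = k" "vec.dim U = CARD('n) - k"
    "direct_sum_pair W (U :: ('a::{field,finite}^'n::finite) set)"
  shows "{W, U} \<in> Omega1 k"
  unfolding Omega1_def using assms by blast

lemma main_geo:
  fixes G :: "(('a::{field,finite}^'n::finite) set set \<Rightarrow> ('a^'n) set set) set"
    and A :: "'n set" and \<phi> :: "'n \<Rightarrow> 'n" and a0 c0 :: 'n
  assumes sg: "subgroup G (BijGroup (Omega1 k :: ('a^'n) set set set))"
    and psl: "PSL_on k \<subseteq> G" and aut: "G \<subseteq> Aut_on k" and ng: "\<not> G \<subseteq> PGammaL_on k"
    and inj: "inj_on \<phi> A" and disj: "A \<inter> \<phi> ` A = {}" and a0: "a0 \<in> A"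
    and c0: "c0 \<notin> A" "c0 \<notin> \<phi> ` A" and cA: "card A = k" and dk: "2 * k < CARD('n)"
  shows "\<not> IBIS (Omega1 k :: ('a^'n) set set set) G"
proof -
  let ?Om = "Omega1 k :: ('a^'n) set set set"
  let ?q = "CARD('a)"
  define B where "B = \<phi> ` A"
  define cA where "cA = (coord A :: ('a^'n) set)"
  define cnA where "cnA = (coord (- A) :: ('a^'n) set)"
  define cB where "cB = (coord B :: ('a^'n) set)"
  define cnB where "cnB = (coord (- B) :: ('a^'n) set)"
  define D where "D = (Dl A \<phi> :: ('a^'n) set)"
  define P1 where "P1 = {cA, cnA}"
  define P2 where "P2 = {D, cnB}"
  define Q where "Q = {cB, cnB}"
  define b0 where "b0 = \<phi> a0"
  have b0B: "b0 \<in> B" using a0 unfolding b0_def B_def by blast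
  have b0A: "b0 \<notin> A" using b0B disj unfolding B_def by blast
  have c0B: "c0 \<notin> B" using c0 unfolding B_def by blast
  have a0c0: "a0 \<noteq> c0" using a0 c0 by blast
  have a0b0: "a0 \<noteq> b0" using a0 b0A by blast
  have b0c0: "b0 \<noteq> c0" using b0B c0B by blast
  have AB: "A \<inter> B = {}" using disj unfolding B_def by simp
  have cB': "card B = k" using cA inj unfolding B_def by (simp add: card_image)
  have cnA': "card (- A) = CARD('n) - k"
    using cA by (simp add: Compl_eq_Diff_UNIV card_Diff_subset)
  have cnB': "card (- B) = CARD('n) - k"
    using cB' by (simp add: Compl_eq_Diff_UNIV card_Diff_subset)
  have kk: "k < CARD('n) - k" using dk by simp
  have qq: "?q ^ k < ?q ^ (CARD('n) - k)" using kk card_gt1[where 'a='a] by (simp add: power_strict_increasing)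
  have card_cA: "card cA = ?q ^ k" unfolding cA_def using card_coord cA by metis
  have card_cnA: "card cnA = ?q ^ (CARD('n) - k)" unfolding cnA_def using card_coord cnA' by metis
  have card_cB: "card cB = ?q ^ k" unfolding cB_def using card_coord cB' by metis
  have card_cnB: "card cnB = ?q ^ (CARD('n) - k)" unfolding cnB_def using card_coord cnB' by metis
  have card_D: "card D = ?q ^ k" unfolding D_def using card_Dl[OF inj disj] card_coord cA by metis
  have perp_cA: "perp cA = cnA" unfolding cA_def cnA_def by (rule perp_coord)
  have perp_cnA: "perp cnA = cA" unfolding cA_def cnA_def using perp_coord[of "- A"] by simp
  have perp_cB: "perp cB = cnB" unfolding cB_def cnB_def by (rule perp_coord)
  have perp_cnB: "perp cnB = cB" unfolding cB_def cnB_def using perp_coord[of "- B"] by simp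
  have lat1: "msum cA D \<inter> cnA = cB" unfolding cA_def D_def cnA_def cB_def B_def
    by (rule lattice_Dl[OF disj])
  have lat2: "msum cA cB \<inter> cnA = cB" unfolding cA_def cnA_def cB_def by (rule lattice_coord[OF AB])
  have cBD: "cB \<noteq> D" unfolding cB_def D_def B_def by (rule coord_ne_Dl[OF disj a0])
  have cBnB: "cB \<noteq> cnB" using card_cB card_cnB qq by auto
  (* membership in Omega *)
  have P1O: "P1 \<in> ?Om" unfolding P1_def cA_def cnA_def
    by (rule Omega_mem[OF subspace_coord subspace_coord _ _ direct_coord])
      (simp_all only: dim_coord cA cnA')
  have QO: "Q \<in> ?Om" unfolding Q_def cB_def cnB_def
    by (rule Omega_mem[OF subspace_coord subspace_coord _ _ direct_coord])
      (simp_all only: dim_coord cB' cnB')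
  have P2O: "P2 \<in> ?Om" unfolding P2_def D_def cnB_def B_def
    by (rule Omega_mem[OF subspace_Dl subspace_coord _ _ direct_Dl[OF inj disj]])
      (simp_all only: dim_coord dim_Dl[OF inj disj] cA cnB'[unfolded B_def])
  (* stabiliser claim *)
  have claim: "g Q = Q" if gA: "g \<in> Aut_on k" and g1: "g P1 = P1" and g2: "g P2 = P2" for g
  proof -
    from gA show ?thesis
    proof (cases rule: Aut_cases)
      case (1 h)
      have ih: "inj h" using semilinear_inj[OF 1(1)] .
      have ci: "\<And>X. card (h ` X) = card X" using ih by (simp add: card_image inj_on_subset)
      have "{h ` cA, h ` cnA} = {cA, cnA}" using g1 1(2) P1O unfolding P1_def by simp
      then have h1: "h ` cA = cA \<and> h ` cnA = cnA" using ci card_cA card_cnA qq by (intro L_pgl) auto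
      have "{h ` D, h ` cnB} = {D, cnB}" using g2 1(2) P2O unfolding P2_def by simp
      then have h2: "h ` D = D \<and> h ` cnB = cnB" using ci card_D card_cnB qq by (intro L_pgl) auto
      have "h ` cB = h ` (msum cA D) \<inter> h ` cnA" using lat1 ih by (metis image_Int)
      also have "\<dots> = cB" using semilinear_msum[OF 1(1)] h1 h2 lat1 by simp
      finally show ?thesis using 1(2) QO h2 unfolding Q_def by simp
    next
      case (2 h)
      have ih: "inj h" using semilinear_inj[OF 2(1)] .
      have "{perp (h ` cA), perp (h ` cnA)} = {cA, cnA}" using g1 2(2) P1O unfolding P1_def by simp
      then have h1: "h ` cA = cA \<and> h ` cnA = cnA"
        using L_iota[OF _ ih, of cA cnA] perp_cA perp_cnA card_cA card_cnA qq by auto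
      have "{perp (h ` D), perp (h ` cnB)} = {D, cnB}" using g2 2(2) P2O unfolding P2_def by simp
      then have h2: "h ` D = cB"
        using L_iota[OF _ ih, of D cnB] perp_cnB card_cB card_D card_cnB qq by auto
      have "h ` cB = h ` (msum cA D) \<inter> h ` cnA" using lat1 ih by (metis image_Int)
      also have "\<dots> = cB" using semilinear_msum[OF 2(1)] h1 h2 lat2 by simp
      finally have "h ` cB = h ` D" using h2 by simp
      then have "cB = D" using ih by (simp add: inj_image_eq_iff)
      then show ?thesis using cBD by simp
    qed
  qed
  (* witnesses *)
  have indP: "\<And>M. det M = 1 \<Longrightarrow> induced (image (\<lambda>x. M *v x)) ?Om \<in> G"
    using psl unfolding PSL_on_def by blast
  have indv: "\<And>f P. P \<in> ?Om \<Longrightarrow> induced (image f) ?Om P = image f ` P"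
    unfolding induced_def by simp
  define w1 where "w1 = induced (image (\<lambda>x. (tv b0 a0 :: 'a^'n^'n) *v x)) ?Om"
  define w2 where "w2 = induced (image (\<lambda>x. (tv c0 b0 :: 'a^'n^'n) *v x)) ?Om"
  have w1G: "w1 \<in> G" unfolding w1_def using indP det_tv a0b0 by metis
  have w2G: "w2 \<in> G" unfolding w2_def using indP det_tv b0c0 by metis
  have w1m: "w1 P1 \<noteq> P1"
  proof -
    let ?v = "(tv b0 a0 :: 'a^'n^'n) *v ev a0"
    have v: "?v $ a0 = 1" "?v $ b0 = 1" using a0b0 by (simp_all add: tv_apply ev_nth)
    have "(ev a0 :: 'a^'n) \<in> cA" unfolding cA_def coord_def mem_Collect_eq
    proof (intro allI impI)
      fix i assume "i \<notin> A" then have "i \<noteq> a0" using a0 by blast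
      then show "(ev a0 :: 'a^'n) $ i = 0" by (simp add: ev_nth)
    qed
    then have "?v \<in> (\<lambda>x. tv b0 a0 *v x) ` cA" by blast
    moreover have "?v \<notin> cA" using v b0A unfolding cA_def coord_def by auto
    moreover have "?v \<notin> cnA" using v a0 unfolding cnA_def coord_def by auto
    ultimately have n1: "(\<lambda>x. (tv b0 a0 :: 'a^'n^'n) *v x) ` cA \<noteq> cA"
      "(\<lambda>x. (tv b0 a0 :: 'a^'n^'n) *v x) ` cA \<noteq> cnA" by blast+
    have "w1 P1 = {(\<lambda>x. (tv b0 a0 :: 'a^'n^'n) *v x) ` cA, (\<lambda>x. (tv b0 a0 :: 'a^'n^'n) *v x) ` cnA}"
      unfolding w1_def indv[OF P1O] unfolding P1_def by simp
    then show ?thesis unfolding P1_def using pair_moved[OF n1] by simp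
  qed
  have w2P1: "w2 P1 = P1"
  proof -
    have e1: "(\<lambda>x. (tv c0 b0 :: 'a^'n^'n) *v x) ` cA = cA"
    proof -
      have "\<And>x. x \<in> cA \<Longrightarrow> (tv c0 b0 :: 'a^'n^'n) *v x = x"
        using b0A unfolding cA_def coord_def by (auto simp: vec_eq_iff tv_apply)
      then show ?thesis by simp
    qed
    have e2: "(\<lambda>x. (tv c0 b0 :: 'a^'n^'n) *v x) ` cnA = cnA"
    proof (rule endo_inj_surj)
      show "(\<lambda>x. (tv c0 b0 :: 'a^'n^'n) *v x) ` cnA \<subseteq> cnA"
        using c0 unfolding cnA_def coord_def by (auto simp: tv_apply)
      show "inj_on (\<lambda>x. (tv c0 b0 :: 'a^'n^'n) *v x) cnA"
        by (rule inj_on_subset[OF inj_tv[OF b0c0[symmetric]]]) simp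
    qed simp
    show ?thesis unfolding w2_def using indv[OF P1O] e1 e2 unfolding P1_def by simp
  qed
  have w2m: "w2 Q \<noteq> Q"
  proof -
    let ?v = "(tv c0 b0 :: 'a^'n^'n) *v ev b0"
    have v: "?v $ b0 = 1" "?v $ c0 = 1" using b0c0 by (simp_all add: tv_apply ev_nth)
    have "(ev b0 :: 'a^'n) \<in> cB" unfolding cB_def coord_def mem_Collect_eq
    proof (intro allI impI)
      fix i assume "i \<notin> B" then have "i \<noteq> b0" using b0B by blast
      then show "(ev b0 :: 'a^'n) $ i = 0" by (simp add: ev_nth)
    qed
    then have "?v \<in> (\<lambda>x. tv c0 b0 *v x) ` cB" by blast
    moreover have "?v \<notin> cB" using v c0B unfolding cB_def coord_def by auto
    moreover have "?v \<notin> cnB" using v b0B unfolding cnB_def coord_def by auto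
    ultimately have n1: "(\<lambda>x. (tv c0 b0 :: 'a^'n^'n) *v x) ` cB \<noteq> cB"
      "(\<lambda>x. (tv c0 b0 :: 'a^'n^'n) *v x) ` cB \<noteq> cnB" by blast+
    have "w2 Q = {(\<lambda>x. (tv c0 b0 :: 'a^'n^'n) *v x) ` cB, (\<lambda>x. (tv c0 b0 :: 'a^'n^'n) *v x) ` cnB}"
      unfolding w2_def indv[OF QO] unfolding Q_def by simp
    then show ?thesis unfolding Q_def using pair_moved[OF n1] by simp
  qed
  obtain w3 where w3G: "w3 \<in> G" and w3P1: "w3 P1 = P1" and w3Q: "w3 Q = Q" and w3m: "w3 P2 \<noteq> P2"
  proof (cases "?q = 2")
    case True
    have iG: "iota_on k \<in> G" using iota_in_G[OF sg psl aut ng True] .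
    have io: "\<And>P. P \<in> ?Om \<Longrightarrow> iota_on k P = perp ` P" unfolding iota_on_def induced_def by simp
    have "iota_on k P1 = {cnA, cA}" unfolding io[OF P1O] unfolding P1_def using perp_cA perp_cnA by simp
    then have "iota_on k P1 = P1" unfolding P1_def by (simp add: insert_commute)
    moreover have "iota_on k Q = {cnB, cB}" unfolding io[OF QO] unfolding Q_def using perp_cB perp_cnB by simp
    then have "iota_on k Q = Q" unfolding Q_def by (simp add: insert_commute)
    moreover have "iota_on k P2 \<noteq> P2"
    proof -
      have "iota_on k P2 = {perp D, cB}" unfolding io[OF P2O] unfolding P2_def using perp_cnB by simp
      then show ?thesis unfolding P2_def using pair_moved2[OF cBD cBnB] by simp
    qed
    ultimately show ?thesis using that iG by blast
  next
    case False
    obtain l :: 'a where l: "l \<noteq> 0" "l \<noteq> 1" using field3_ex[OF False] by blast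
    define dd where "dd = (\<lambda>r. (if r = b0 then l else 1) * (if r = c0 then inverse l else 1))"
    have ddnz: "\<And>r. dd r \<noteq> 0" unfolding dd_def using l by simp
    have ddb: "dd b0 = l" "dd a0 = 1" unfolding dd_def using b0c0 a0b0 a0c0 by simp_all
    have "det (dgm dd :: 'a^'n^'n) = 1"
      unfolding det_dgm dd_def prod.distrib using l by simp
    then have wG: "induced (image (\<lambda>x. (dgm dd :: 'a^'n^'n) *v x)) ?Om \<in> G" using indP by blast
    have fx: "\<And>S. (\<lambda>x. (dgm dd :: 'a^'n^'n) *v x) ` coord S = coord S"
      using dgm_coord[OF ddnz] by simp
    have "induced (image (\<lambda>x. (dgm dd :: 'a^'n^'n) *v x)) ?Om P1 = P1"
      using indv[OF P1O] fx unfolding P1_def cA_def cnA_def by simp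
    moreover have "induced (image (\<lambda>x. (dgm dd :: 'a^'n^'n) *v x)) ?Om Q = Q"
      using indv[OF QO] fx unfolding Q_def cB_def cnB_def by simp
    moreover have "induced (image (\<lambda>x. (dgm dd :: 'a^'n^'n) *v x)) ?Om P2 \<noteq> P2"
    proof -
      let ?u = "uv a0 b0 :: 'a^'n"
      let ?v = "(dgm dd :: 'a^'n^'n) *v ?u"
      have uD: "?u \<in> D" unfolding D_def b0_def by (rule uv_Dl[OF inj disj a0])
      have v: "?v $ a0 = 1" "?v $ b0 = l" unfolding dgm_apply uv_nth using ddb by simp_all
      have "?v \<in> (\<lambda>x. dgm dd *v x) ` D" using uD by blast
      moreover have "?v \<notin> D" using v l a0 unfolding D_def Dl_def b0_def by auto
      moreover have "?v \<notin> cnB" using v l b0B unfolding cnB_def coord_def by auto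
      ultimately have n1: "(\<lambda>x. (dgm dd :: 'a^'n^'n) *v x) ` D \<noteq> D"
        "(\<lambda>x. (dgm dd :: 'a^'n^'n) *v x) ` D \<noteq> cnB" by blast+
      have "induced (image (\<lambda>x. (dgm dd :: 'a^'n^'n) *v x)) ?Om P2 =
         {(\<lambda>x. (dgm dd :: 'a^'n^'n) *v x) ` D, (\<lambda>x. (dgm dd :: 'a^'n^'n) *v x) ` cnB}"
        unfolding indv[OF P2O] unfolding P2_def by simp
      then show ?thesis unfolding P2_def using pair_moved[OF n1] by simp
    qed
    ultimately show ?thesis using that wG by blast
  qed
  (* assemble *)
  have st0: "pw_stab G [] = G" unfolding pw_stab_def by simp
  have csX: "cs G [P1, Q, P2]"
    unfolding cs_def
  proof (intro allI impI)
    fix i assume "i < length [P1, Q, P2]"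
    then have "i = 0 \<or> i = 1 \<or> i = 2" by auto
    then show "pw_stab G (take (Suc i) [P1, Q, P2]) \<subset> pw_stab G (take i [P1, Q, P2])"
    proof (elim disjE)
      assume "i = 0"
      then show ?thesis using w1G w1m unfolding pw_stab_def by auto
    next
      assume "i = 1"
      then show ?thesis using w2G w2P1 w2m unfolding pw_stab_def by auto
    next
      assume "i = 2"
      then show ?thesis using w3G w3P1 w3Q w3m unfolding pw_stab_def by auto
    qed
  qed
  have sub: "pw_stab G [P1, P2] \<subseteq> pw_stab G [P1, Q, P2]"
    unfolding pw_stab_def using claim aut by auto
  show ?thesis
    by (rule not_IBIS_crit[OF sg _ csX _ _ _ sub]) (use P1O P2O QO in auto)
qed



theorem lemma3p5:
  fixes G :: "(('a::{field,finite}^'n::finite) set set \<Rightarrow> ('a^'n) set set) set"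
    and k :: nat
  assumes "CARD('n) \<ge> 3"
    and "1 \<le> k" and "2 * k < CARD('n)"
    and "subgroup G (BijGroup (Omega1 k :: ('a^'n) set set set))"
    and "normal (PSL_on k) ((BijGroup (Omega1 k :: ('a^'n) set set set))\<lparr>carrier := G\<rparr>)"
    and "G \<subseteq> Aut_on k"
    and "\<not> G \<subseteq> PGammaL_on k"
  shows "\<not> IBIS (Omega1 k :: ('a^'n) set set set) G"
proof -
  let ?d = "CARD('n)"
  have psl: "PSL_on k \<subseteq> G"
    using normal_imp_subgroup[OF assms(5)] subgroup.subset by fastforce
  obtain en :: "nat \<Rightarrow> 'n" where en: "bij_betw en {0..<?d} UNIV"
    using ex_bij_betw_nat_finite[of "UNIV :: 'n set"] by auto
  have ien: "inj_on en {0..<?d}" using en bij_betw_imp_inj_on by blast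
  have eq: "\<And>i j. i < ?d \<Longrightarrow> j < ?d \<Longrightarrow> en i = en j \<longleftrightarrow> i = j"
    using ien by (auto dest: inj_onD)
  define A where "A = en ` {0..<k}"
  define \<phi> where "\<phi> = (\<lambda>i. en (inv_into {0..<?d} en i + k))"
  have phi: "\<And>j. j < k \<Longrightarrow> \<phi> (en j) = en (j + k)"
    unfolding \<phi>_def using ien assms(3) by simp
  have inj: "inj_on \<phi> A"
  proof (rule inj_onI)
    fix x y assume "x \<in> A" "y \<in> A" "\<phi> x = \<phi> y"
    then obtain i j where "i < k" "j < k" "x = en i" "y = en j" "en (i + k) = en (j + k)"
      unfolding A_def using phi by auto
    then show "x = y" using eq[of "i + k" "j + k"] assms(3) by simp
  qed
  have disj: "A \<inter> \<phi> ` A = {}"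
  proof -
    have "\<And>i j. i < k \<Longrightarrow> j < k \<Longrightarrow> en i \<noteq> en (j + k)" using eq assms(3) by simp
    then show ?thesis unfolding A_def using phi by auto
  qed
  have a0: "en 0 \<in> A" unfolding A_def using assms(2) by simp
  have c0a: "en (2 * k) \<notin> A"
  proof
    assume "en (2 * k) \<in> A"
    then obtain i where "i < k" "en (2 * k) = en i" unfolding A_def by auto
    then show False using eq[of "2 * k" i] assms(3) by simp
  qed
  have c0b: "en (2 * k) \<notin> \<phi> ` A"
  proof
    assume "en (2 * k) \<in> \<phi> ` A"
    then obtain i where "i < k" "en (2 * k) = \<phi> (en i)" unfolding A_def by auto
    then have "i < k" "en (2 * k) = en (i + k)" using phi by auto
    then show False using eq[of "2 * k" "i + k"] assms(3) by simp
  qed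
  note c0 = c0a c0b
  have cA: "card A = k" unfolding A_def using assms(3)
    by (subst card_image) (auto intro: inj_on_subset[OF ien])
  show ?thesis
    by (rule main_geo[OF assms(4) psl assms(6) assms(7) inj disj a0 c0 cA assms(3)])
qed


end
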